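(* Let $(\mathcal{V},g)$ be a finite-dimensional real scalar product space, let $J_1,\dots,J_m$ be skew-adjoint endomorphisms of $\mathcal{V}$ satisfying $J_iJ_j+J_jJ_i=2c_i\delta_{ij}\,\mathrm{id}$ for all $1\le i,j\le m$, where $c_1,\dots,c_m\in\mathbb{R}$ and at most one of the $c_i$ equals $0$, and let $\mu_0,\dots,\mu_m\in\mathbb{R}$. Then $R=\mu_0R^0+\sum_{i=1}^m\mu_iR^{J_i}$ is Jacobi-dual.
   Context: A scalar product space is a finite-dimensional real vector space with a nondegenerate symmetric bilinear form $g$; $\varepsilon_X=g(X,X)$, and $X$ is nonnull if $\varepsilon_X\neq 0$. $R^0(X,Y,Z,W)=g(Y,Z)g(X,W)-g(X,Z)g(Y,W)$; for skew-adjoint $J$, $R^J(X,Y,Z,W)=g(JX,Z)g(JY,W)-g(JY,Z)g(JX,W)+2g(JX,Y)g(JZ,W)$. The Jacobi operator of an algebraic curvature tensor $R$ is $\mathcal{J}_X(Y)=\sum_{i=1}^n\varepsilon_{E_i}R(Y,X,X,E_i)E_i$ for an orthonormal basis $(E_i)$. An eigenvector of $\mathcal{J}_X$ is a nonzero $Y$ with $\mathcal{J}_X(Y)=\lambda Y$ for some $\lambda\in\mathbb{R}$. $R$ is Jacobi-dual if for all $X,Y\in\mathcal{V}$ with $X$ nonnull: whenever $Y$ is an eigenvector of $\mathcal{J}_X$, then $X$ is an eigenvector of $\mathcal{J}_Y$. *)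

theory Defs
  imports "HOL-Analysis.Analysis"
begin

text \<open>A scalar product space: a finite-dimensional real vector space (a type of
class euclidean_space; its own inner product is ignored) together with a
nondegenerate symmetric bilinear form g.\<close>

definition scalar_product :: "('a::euclidean_space \<Rightarrow> 'a \<Rightarrow> real) \<Rightarrow> bool" where
  "scalar_product g \<longleftrightarrow> bilinear g \<and> (\<forall>x y. g x y = g y x)
     \<and> (\<forall>x. (\<forall>y. g x y = 0) \<longrightarrow> x = 0)"

definition orthonormal_basis :: "('a::euclidean_space \<Rightarrow> 'a \<Rightarrow> real) \<Rightarrow> 'a set \<Rightarrow> bool" where
  "orthonormal_basis g B \<longleftrightarrow> independent B \<and> span B = UNIV
     \<and> (\<forall>e\<in>B. g e e = 1 \<or> g e e = -1)
     \<and> (\<forall>e\<in>B. \<forall>f\<in>B. e \<noteq> f \<longrightarrow> g e f = 0)"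

definition skew_adjoint :: "('a::euclidean_space \<Rightarrow> 'a \<Rightarrow> real) \<Rightarrow> ('a \<Rightarrow> 'a) \<Rightarrow> bool" where
  "skew_adjoint g J \<longleftrightarrow> linear J \<and> (\<forall>x y. g (J x) y = - g x (J y))"

definition R0 :: "('a \<Rightarrow> 'a \<Rightarrow> real) \<Rightarrow> 'a \<Rightarrow> 'a \<Rightarrow> 'a \<Rightarrow> 'a \<Rightarrow> real" where
  "R0 g X Y Z W = g Y Z * g X W - g X Z * g Y W"

definition RJ :: "('a \<Rightarrow> 'a \<Rightarrow> real) \<Rightarrow> ('a \<Rightarrow> 'a) \<Rightarrow> 'a \<Rightarrow> 'a \<Rightarrow> 'a \<Rightarrow> 'a \<Rightarrow> real" where
  "RJ g J X Y Z W = g (J X) Z * g (J Y) W - g (J Y) Z * g (J X) W + 2 * g (J X) Y * g (J Z) W"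

definition jacobi_op :: "('a::euclidean_space \<Rightarrow> 'a \<Rightarrow> real) \<Rightarrow> ('a \<Rightarrow> 'a \<Rightarrow> 'a \<Rightarrow> 'a \<Rightarrow> real)
    \<Rightarrow> 'a \<Rightarrow> 'a \<Rightarrow> 'a" where
  "jacobi_op g R X Y = (let B = (SOME B. orthonormal_basis g B) in
     (\<Sum>e\<in>B. (g e e * R Y X X e) *\<^sub>R e))"

definition eigenvector :: "('a::real_vector \<Rightarrow> 'a) \<Rightarrow> 'a \<Rightarrow> bool" where
  "eigenvector T Y \<longleftrightarrow> Y \<noteq> 0 \<and> (\<exists>l::real. T Y = l *\<^sub>R Y)"

definition jacobi_dual :: "('a::euclidean_space \<Rightarrow> 'a \<Rightarrow> real) \<Rightarrow> ('a \<Rightarrow> 'a \<Rightarrow> 'a \<Rightarrow> 'a \<Rightarrow> real) \<Rightarrow> bool" where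
  "jacobi_dual g R \<longleftrightarrow> (\<forall>X Y. g X X \<noteq> 0 \<longrightarrow> eigenvector (jacobi_op g R X) Y
       \<longrightarrow> eigenvector (jacobi_op g R Y) X)"

end

theory Submission
  imports Defs
begin

lemma g_lsum: "bilinear g \<Longrightarrow> g (sum f S) y = (\<Sum>i\<in>S. g (f i) y)"
proof -
  assume "bilinear g"
  then have "linear (\<lambda>x. g x y)" by (simp add: bilinear_def)
  then show ?thesis using linear_sum[of "\<lambda>x. g x y"] by simp
qed

lemma g_rsum: "bilinear g \<Longrightarrow> g y (sum f S) = (\<Sum>i\<in>S. g y (f i))"
proof -
  assume "bilinear g"
  then have "linear (\<lambda>x. g y x)" by (simp add: bilinear_def)
  then show ?thesis using linear_sum[of "\<lambda>x. g y x"] by simp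
qed

lemma onb_sub:
  fixes g :: "'a::euclidean_space \<Rightarrow> 'a \<Rightarrow> real"
  assumes bil: "bilinear g" and sym: "\<And>x y. g x y = g y x"
  shows "subspace S \<Longrightarrow> (\<forall>x\<in>S. (\<forall>y\<in>S. g x y = 0) \<longrightarrow> x = 0) \<Longrightarrow>
    \<exists>B\<subseteq>S. independent B \<and> span B = S \<and> (\<forall>e\<in>B. g e e = 1 \<or> g e e = -1)
     \<and> (\<forall>e\<in>B. \<forall>f\<in>B. e \<noteq> f \<longrightarrow> g e f = 0)"
proof (induction "dim S" arbitrary: S rule: less_induct)
  case less
  note sub = less.prems(1) and nd = less.prems(2)
  show ?case
  proof (cases "S = {0}")
    case True
    then show ?thesis by (intro exI[of _ "{}"]) (auto simp: independent_empty)
  next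
    case False
    have "\<exists>e\<in>S. g e e \<noteq> 0"
    proof (rule ccontr)
      assume "\<not> ?thesis"
      then have z: "\<forall>e\<in>S. g e e = 0" by auto
      obtain x where x: "x \<in> S" "x \<noteq> 0" using False sub subspace_0 by blast
      then obtain y where y: "y \<in> S" "g x y \<noteq> 0" using nd by blast
      have "x + y \<in> S" using x y sub subspace_add by blast
      then have "g (x+y) (x+y) = 0" using z by auto
      moreover have "g (x+y) (x+y) = g x x + 2 * g x y + g y y"
        using bilinear_ladd[OF bil] bilinear_radd[OF bil] sym[of x y] by simp
      ultimately show False using z x y by auto
    qed
    then obtain e0 where e0: "e0 \<in> S" "g e0 e0 \<noteq> 0" by blast
    define e where "e = (1 / sqrt \<bar>g e0 e0\<bar>) *\<^sub>R e0"
    have "g e e = g e0 e0 / \<bar>g e0 e0\<bar>"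
      unfolding e_def using bilinear_lmul[OF bil] bilinear_rmul[OF bil]
      by (simp add: real_sqrt_mult[symmetric])
    then have ee: "g e e = 1 \<or> g e e = -1" using e0(2) by (cases "g e0 e0 > 0") auto
    have ee2: "g e e * g e e = 1" using ee by auto
    have eS: "e \<in> S" unfolding e_def using e0 sub subspace_scale by blast
    define S' where "S' = {x\<in>S. g e x = 0}"
    have subS': "subspace S'"
      unfolding subspace_def S'_def using sub
      by (auto simp: subspace_0 subspace_add subspace_scale bilinear_rzero[OF bil]
          bilinear_radd[OF bil] bilinear_rmul[OF bil])
    have "S' \<subset> S" using eS ee unfolding S'_def by force
    then have "dim S' < dim S"
      using dim_psubset[of S' S] span_eq_iff[of S'] span_eq_iff[of S] subS' sub by metis
    moreover have "\<forall>x\<in>S'. (\<forall>y\<in>S'. g x y = 0) \<longrightarrow> x = 0"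
    proof (intro ballI impI)
      fix x assume x: "x \<in> S'" and h: "\<forall>y\<in>S'. g x y = 0"
      have "\<forall>z\<in>S. g x z = 0"
      proof
        fix z assume z: "z \<in> S"
        define t where "t = g e z * g e e"
        have w: "z - t *\<^sub>R e \<in> S'"
          unfolding S'_def using z eS sub
          by (auto simp: subspace_diff subspace_scale bilinear_rsub[OF bil] bilinear_rmul[OF bil]
              t_def ee2 mult.assoc)
        have "g x z = g x (z - t *\<^sub>R e) + t * g x e"
          using bilinear_rsub[OF bil] bilinear_rmul[OF bil] by simp
        also have "\<dots> = 0" using h w x sym[of x e] unfolding S'_def by simp
        finally show "g x z = 0" .
      qed
      then show "x = 0" using nd x unfolding S'_def by auto
    qed
    ultimately obtain B' where B': "B' \<subseteq> S'" "independent B'" "span B' = S'"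
      "\<forall>e\<in>B'. g e e = 1 \<or> g e e = -1" "\<forall>e\<in>B'. \<forall>f\<in>B'. e \<noteq> f \<longrightarrow> g e f = 0"
      using less.hyps[OF _ subS'] by blast
    have enot: "e \<notin> span B'" using B'(3) ee unfolding S'_def by auto
    have "span (insert e B') = S"
    proof
      show "span (insert e B') \<subseteq> S"
        using span_minimal[of "insert e B'" S] eS B'(1) sub unfolding S'_def by auto
      show "S \<subseteq> span (insert e B')"
      proof
        fix z assume z: "z \<in> S"
        define t where "t = g e z * g e e"
        have w: "z - t *\<^sub>R e \<in> S'"
          unfolding S'_def using z eS sub
          by (auto simp: subspace_diff subspace_scale bilinear_rsub[OF bil] bilinear_rmul[OF bil]
              t_def ee2 mult.assoc)
        then have "z - t *\<^sub>R e \<in> span (insert e B')" using B'(3) span_mono[of B' "insert e B'"] by auto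
        moreover have "t *\<^sub>R e \<in> span (insert e B')" by (simp add: span_base span_scale)
        ultimately have "(z - t *\<^sub>R e) + t *\<^sub>R e \<in> span (insert e B')" using span_add by blast
        then show "z \<in> span (insert e B')" by simp
      qed
    qed
    moreover have "independent (insert e B')" using independent_insertI enot B'(2) by blast
    moreover have "\<forall>f\<in>B'. g e f = 0 \<and> g f e = 0" using B'(1) sym unfolding S'_def by auto
    ultimately show ?thesis using B' ee eS
      by (intro exI[of _ "insert e B'"]) (auto simp: S'_def)
  qed
qed

lemma ex_onb:
  fixes g :: "'a::euclidean_space \<Rightarrow> 'a \<Rightarrow> real"
  assumes "scalar_product g" shows "\<exists>B. orthonormal_basis g B"
proof -
  have "\<exists>B\<subseteq>UNIV. independent B \<and> span B = (UNIV::'a set) \<and> (\<forall>e\<in>B. g e e = 1 \<or> g e e = -1)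
     \<and> (\<forall>e\<in>B. \<forall>f\<in>B. e \<noteq> f \<longrightarrow> g e f = 0)"
    using assms unfolding scalar_product_def
    by (intro onb_sub) (auto simp: subspace_UNIV)
  then show ?thesis unfolding orthonormal_basis_def by blast
qed

lemma onb_expand:
  fixes g :: "'a::euclidean_space \<Rightarrow> 'a \<Rightarrow> real"
  assumes bil: "bilinear g" and B: "orthonormal_basis g B"
  shows "(\<Sum>e\<in>B. (g e e * g v e) *\<^sub>R e) = v"
proof -
  have fin: "finite B" using B independent_bound unfolding orthonormal_basis_def by blast
  have "v \<in> span B" using B unfolding orthonormal_basis_def by auto
  then obtain u where u: "v = (\<Sum>f\<in>B. u f *\<^sub>R f)" using span_finite[OF fin] by auto
  have "g v e = u e * g e e" if e: "e \<in> B" for e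
  proof -
    have "g v e = (\<Sum>f\<in>B. u f * g f e)" unfolding u g_lsum[OF bil] using bilinear_lmul[OF bil] by simp
    also have "\<dots> = u e * g e e + (\<Sum>f\<in>B-{e}. u f * g f e)" using sum.remove[OF fin e] by simp
    also have "(\<Sum>f\<in>B-{e}. u f * g f e) = 0" using B e unfolding orthonormal_basis_def by (intro sum.neutral) auto
    finally show ?thesis by simp
  qed
  then have "(\<Sum>e\<in>B. (g e e * g v e) *\<^sub>R e) = (\<Sum>e\<in>B. u e *\<^sub>R e)"
    using B unfolding orthonormal_basis_def by (intro sum.cong) auto
  then show ?thesis using u by simp
qed

lemma jac_eq:
  fixes g :: "'a::euclidean_space \<Rightarrow> 'a \<Rightarrow> real"
  assumes sp: "scalar_product g" and h: "\<And>e. R Y X X e = g T e"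
  shows "jacobi_op g R X Y = T"
proof -
  have B: "orthonormal_basis g (SOME B. orthonormal_basis g B)"
    using someI_ex[OF ex_onb[OF sp]] .
  have bil: "bilinear g" using sp unfolding scalar_product_def by auto
  show ?thesis unfolding jacobi_op_def Let_def h using onb_expand[OF bil B] by simp
qed

lemma cliff:
  fixes J :: "nat \<Rightarrow> 'a::real_vector \<Rightarrow> 'a"
  assumes fin: "finite I" and lin: "\<And>i. i \<in> I \<Longrightarrow> linear (J i)"
    and rel: "\<And>i j. i \<in> I \<Longrightarrow> j \<in> I \<Longrightarrow> J i (J j x) + J j (J i x) = (if i = j then 2 * c i else 0) *\<^sub>R x"
  shows "(\<Sum>i\<in>I. b i *\<^sub>R J i (\<Sum>j\<in>I. b j *\<^sub>R J j x)) = (\<Sum>i\<in>I. b i * b i * c i) *\<^sub>R x"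
proof -
  define S where "S = (\<Sum>i\<in>I. \<Sum>j\<in>I. (b i * b j) *\<^sub>R J i (J j x))"
  have e1: "(\<Sum>i\<in>I. b i *\<^sub>R J i (\<Sum>j\<in>I. b j *\<^sub>R J j x)) = S"
    unfolding S_def
  proof (rule sum.cong[OF refl])
    fix i assume i: "i \<in> I"
    show "b i *\<^sub>R J i (\<Sum>j\<in>I. b j *\<^sub>R J j x) = (\<Sum>j\<in>I. (b i * b j) *\<^sub>R J i (J j x))"
      by (simp add: linear_sum[OF lin[OF i]] linear_scale[OF lin[OF i]] scaleR_sum_right)
  qed
  have S2: "S = (\<Sum>i\<in>I. \<Sum>j\<in>I. (b i * b j) *\<^sub>R J j (J i x))"
    unfolding S_def by (subst sum.swap) (simp add: mult.commute)
  have "S + S = (\<Sum>i\<in>I. \<Sum>j\<in>I. (b i * b j) *\<^sub>R (J i (J j x) + J j (J i x)))"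
  proof -
    have "S + S = (\<Sum>i\<in>I. \<Sum>j\<in>I. (b i * b j) *\<^sub>R J i (J j x)) + (\<Sum>i\<in>I. \<Sum>j\<in>I. (b i * b j) *\<^sub>R J j (J i x))"
      using S2 S_def by simp
    then show ?thesis by (simp add: sum.distrib[symmetric] scaleR_add_right)
  qed
  also have "\<dots> = (\<Sum>i\<in>I. \<Sum>j\<in>I. (if i = j then (b i * b i * (2 * c i)) *\<^sub>R x else 0))"
    by (intro sum.cong refl) (auto simp: rel)
  also have "\<dots> = (\<Sum>i\<in>I. (b i * b i * (2 * c i)) *\<^sub>R x)"
    using fin by (simp add: sum.delta)
  also have "\<dots> = 2 *\<^sub>R ((\<Sum>i\<in>I. b i * b i * c i) *\<^sub>R x)"
    by (simp add: scaleR_sum_left[symmetric] sum_distrib_left algebra_simps)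
  finally have "2 *\<^sub>R S = 2 *\<^sub>R ((\<Sum>i\<in>I. b i * b i * c i) *\<^sub>R x)" by (simp add: scaleR_2)
  then have "(1/2::real) *\<^sub>R (2 *\<^sub>R S) = (1/2::real) *\<^sub>R (2 *\<^sub>R ((\<Sum>i\<in>I. b i * b i * c i) *\<^sub>R x))"
    by metis
  then have "S = (\<Sum>i\<in>I. b i * b i * c i) *\<^sub>R x" by (simp only: scaleR_scaleR) simp
  then show ?thesis using e1 by simp
qed

lemma vec_alg:
  fixes X Y P Q T :: "'a::real_vector"
  assumes "d *\<^sub>R Y = \<alpha> *\<^sub>R X - 3 *\<^sub>R P" "d *\<^sub>R Q = \<alpha> *\<^sub>R P - (3*C) *\<^sub>R X"
    "T = e *\<^sub>R X - \<alpha> *\<^sub>R Y - 3 *\<^sub>R Q"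
  shows "d *\<^sub>R T = (d*e - \<alpha>*\<alpha> + 9*C) *\<^sub>R X"
proof -
  have "d *\<^sub>R T = (d*e) *\<^sub>R X - \<alpha> *\<^sub>R (d *\<^sub>R Y) - 3 *\<^sub>R (d *\<^sub>R Q)"
    unfolding assms(3) by (simp add: algebra_simps)
  also have "\<dots> = (d*e - \<alpha>*\<alpha> + 9*C) *\<^sub>R X"
    unfolding assms(1,2) by (simp add: algebra_simps)
  finally show ?thesis .
qed

theorem mainTheorem2:
  fixes g :: "'a::euclidean_space \<Rightarrow> 'a \<Rightarrow> real"
    and J :: "nat \<Rightarrow> 'a \<Rightarrow> 'a" and c :: "nat \<Rightarrow> real" and \<mu> :: "nat \<Rightarrow> real" and m :: nat
  assumes "scalar_product g"
    and "\<And>i. i \<in> {1..m} \<Longrightarrow> skew_adjoint g (J i)"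
    and "\<And>i j x. i \<in> {1..m} \<Longrightarrow> j \<in> {1..m} \<Longrightarrow>
           J i (J j x) + J j (J i x) = (if i = j then 2 * c i else 0) *\<^sub>R x"
    and "card {i \<in> {1..m}. c i = 0} \<le> 1"
  shows "jacobi_dual g (\<lambda>X Y Z W. \<mu> 0 * R0 g X Y Z W + (\<Sum>i=1..m. \<mu> i * RJ g (J i) X Y Z W))"
proof -
  note sp = assms(1) and rel = assms(3) and card1 = assms(4)
  have bil: "bilinear g" and sym: "\<And>x y. g x y = g y x"
    and nd: "\<And>x. (\<forall>y. g x y = 0) \<Longrightarrow> x = 0"
    using sp unfolding scalar_product_def by auto
  have lin: "\<And>i. i \<in> {1..m} \<Longrightarrow> linear (J i)"
    and skew: "\<And>i x y. i \<in> {1..m} \<Longrightarrow> g (J i x) y = - g x (J i y)"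
    using assms(2) unfolding skew_adjoint_def by auto
  have gJxx: "g (J i x) x = 0" if "i \<in> {1..m}" for i x
    using skew[OF that, of x x] sym[of x "J i x"] by simp
  have gJxy: "g (J i x) y = - g (J i y) x" if "i \<in> {1..m}" for i x y
    using skew[OF that, of x y] sym[of x "J i y"] by simp
  have orth: "g (J i x) (J k x) = (if i = k then - c i * g x x else 0)"
    if i: "i \<in> {1..m}" and k: "k \<in> {1..m}" for i k x
  proof -
    have "g (J i x) (J k x) = - g x (J i (J k x))" using skew[OF i] .
    moreover have "g (J i x) (J k x) = - g x (J k (J i x))" using skew[OF k, of x "J i x"] sym[of "J i x" "J k x"] by simp
    ultimately have "2 * g (J i x) (J k x) = - g x (J i (J k x) + J k (J i x))"
      using bilinear_radd[OF bil] by simp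
    also have "\<dots> = - (if i = k then 2 * c i else 0) * g x x"
      unfolding rel[OF i k] by (simp add: bilinear_rmul[OF bil])
    finally show ?thesis by auto
  qed
  define R where "R = (\<lambda>X Y Z W. \<mu> 0 * R0 g X Y Z W + (\<Sum>i=1..m. \<mu> i * RJ g (J i) X Y Z W))"
  define TT where "TT X Y = \<mu> 0 *\<^sub>R (g X X *\<^sub>R Y - g Y X *\<^sub>R X) +
     (\<Sum>i=1..m. \<mu> i *\<^sub>R (g (J i Y) X *\<^sub>R J i X - g (J i X) X *\<^sub>R J i Y + (2 * g (J i Y) X) *\<^sub>R J i X))"
    for X Y
  have RT: "R Y X X W = g (TT X Y) W" for X Y W
  proof -
    have r0: "g (g X X *\<^sub>R Y - g Y X *\<^sub>R X) W = R0 g Y X X W"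
      by (simp add: R0_def bilinear_lsub[OF bil] bilinear_lmul[OF bil])
    have rj: "g (g (J i Y) X *\<^sub>R J i X - g (J i X) X *\<^sub>R J i Y + (2 * g (J i Y) X) *\<^sub>R J i X) W
       = RJ g (J i) Y X X W" for i
      by (simp add: RJ_def bilinear_ladd[OF bil] bilinear_lsub[OF bil] bilinear_lmul[OF bil])
    have "g (TT X Y) W = \<mu> 0 * g (g X X *\<^sub>R Y - g Y X *\<^sub>R X) W +
      (\<Sum>i=1..m. \<mu> i * g (g (J i Y) X *\<^sub>R J i X - g (J i X) X *\<^sub>R J i Y + (2 * g (J i Y) X) *\<^sub>R J i X) W)"
      unfolding TT_def by (simp add: bilinear_ladd[OF bil] bilinear_lmul[OF bil] g_lsum[OF bil])
    then show ?thesis unfolding R_def r0 rj by simp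
  qed
  have jac: "jacobi_op g R X Y = TT X Y" for X Y
    using jac_eq[OF sp] RT by blast
  show ?thesis
    unfolding jacobi_dual_def R_def[symmetric]
  proof (intro allI impI)
    fix X Y assume nX: "g X X \<noteq> 0" and ev: "eigenvector (jacobi_op g R X) Y"
    then obtain l where l: "TT X Y = l *\<^sub>R Y" unfolding eigenvector_def jac by auto
    have X0: "X \<noteq> 0" using nX bilinear_lzero[OF bil] by auto
    define b where "b i = \<mu> i * g (J i Y) X" for i
    define P where "P = (\<Sum>i=1..m. b i *\<^sub>R J i X)"
    define Q where "Q = (\<Sum>i=1..m. b i *\<^sub>R J i Y)"
    have F1: "TT X Y = \<mu> 0 *\<^sub>R (g X X *\<^sub>R Y - g Y X *\<^sub>R X) + 3 *\<^sub>R P"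
      unfolding TT_def P_def scaleR_sum_right
    proof (intro arg_cong2[where f="(+)"] refl sum.cong)
      fix i assume i: "i \<in> {1..m}"
      have "\<mu> i *\<^sub>R (g (J i Y) X *\<^sub>R J i X - g (J i X) X *\<^sub>R J i Y + (2 * g (J i Y) X) *\<^sub>R J i X)
          = (\<mu> i * (g (J i Y) X + 2 * g (J i Y) X)) *\<^sub>R J i X"
        using gJxx[OF i] by (simp add: scaleR_add_left[symmetric])
      then show "\<mu> i *\<^sub>R (g (J i Y) X *\<^sub>R J i X - g (J i X) X *\<^sub>R J i Y + (2 * g (J i Y) X) *\<^sub>R J i X)
          = 3 *\<^sub>R (b i *\<^sub>R J i X)" by (simp add: b_def algebra_simps)
    qed
    have F2: "TT Y X = \<mu> 0 *\<^sub>R (g Y Y *\<^sub>R X - g X Y *\<^sub>R Y) - 3 *\<^sub>R Q"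
    proof -
      have "(\<Sum>i=1..m. \<mu> i *\<^sub>R (g (J i X) Y *\<^sub>R J i Y - g (J i Y) Y *\<^sub>R J i X + (2 * g (J i X) Y) *\<^sub>R J i Y))
        = (\<Sum>i=1..m. - (3 *\<^sub>R (b i *\<^sub>R J i Y)))"
      proof (intro sum.cong refl)
        fix i assume i: "i \<in> {1..m}"
        have "\<mu> i *\<^sub>R (g (J i X) Y *\<^sub>R J i Y - g (J i Y) Y *\<^sub>R J i X + (2 * g (J i X) Y) *\<^sub>R J i Y)
          = (\<mu> i * (g (J i X) Y + 2 * g (J i X) Y)) *\<^sub>R J i Y"
          using gJxx[OF i] by (simp add: scaleR_add_left[symmetric])
        then show "\<mu> i *\<^sub>R (g (J i X) Y *\<^sub>R J i Y - g (J i Y) Y *\<^sub>R J i X + (2 * g (J i X) Y) *\<^sub>R J i Y)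
          = - (3 *\<^sub>R (b i *\<^sub>R J i Y))" using gJxy[OF i, of X Y] by (simp add: b_def algebra_simps)
      qed
      then show ?thesis unfolding TT_def Q_def scaleR_sum_right sum_negf by simp
    qed
    define d where "d = \<mu> 0 * g X X - l"
    define \<alpha> where "\<alpha> = \<mu> 0 * g X Y"
    have E: "d *\<^sub>R Y = \<alpha> *\<^sub>R X - 3 *\<^sub>R P"
    proof -
      have "l *\<^sub>R Y = \<mu> 0 *\<^sub>R (g X X *\<^sub>R Y - g Y X *\<^sub>R X) + 3 *\<^sub>R P" using F1 l by simp
      then show ?thesis unfolding d_def \<alpha>_def using sym[of X Y] by (simp add: algebra_simps)
    qed
    have "\<exists>k. TT Y X = k *\<^sub>R X"
    proof (cases "d = 0")
      case False
      have JdY: "J i (d *\<^sub>R Y) = \<alpha> *\<^sub>R J i X - 3 *\<^sub>R J i (\<Sum>j=1..m. b j *\<^sub>R J j X)" if i: "i \<in> {1..m}" for i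
        unfolding E P_def using lin[OF i] by (simp add: linear_diff linear_scale)
      have "d *\<^sub>R Q = (\<Sum>i=1..m. b i *\<^sub>R J i (d *\<^sub>R Y))"
        unfolding Q_def scaleR_sum_right
        by (intro sum.cong refl) (simp add: linear_scale[OF lin] algebra_simps)
      also have "\<dots> = (\<Sum>i=1..m. \<alpha> *\<^sub>R (b i *\<^sub>R J i X) - 3 *\<^sub>R (b i *\<^sub>R J i (\<Sum>j=1..m. b j *\<^sub>R J j X)))"
        by (intro sum.cong refl) (simp add: JdY algebra_simps)
      also have "\<dots> = \<alpha> *\<^sub>R P - 3 *\<^sub>R (\<Sum>i=1..m. b i *\<^sub>R J i (\<Sum>j=1..m. b j *\<^sub>R J j X))"
        unfolding P_def by (simp add: sum_subtractf scaleR_sum_right)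
      also have "\<dots> = \<alpha> *\<^sub>R P - (3 * (\<Sum>i=1..m. b i * b i * c i)) *\<^sub>R X"
      proof -
        have C: "(\<Sum>i=1..m. b i *\<^sub>R J i (\<Sum>j=1..m. b j *\<^sub>R J j X)) = (\<Sum>i=1..m. b i * b i * c i) *\<^sub>R X"
          by (rule cliff[where I="{1..m}" and J=J and c=c and b=b and x=X]) (simp_all add: lin rel)
        show ?thesis unfolding C by simp
      qed
      finally have dQ: "d *\<^sub>R Q = \<alpha> *\<^sub>R P - (3 * (\<Sum>i=1..m. b i * b i * c i)) *\<^sub>R X" .
      have T2: "TT Y X = (\<mu> 0 * g Y Y) *\<^sub>R X - \<alpha> *\<^sub>R Y - 3 *\<^sub>R Q"
        unfolding F2 \<alpha>_def by (simp add: algebra_simps)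
      have "d *\<^sub>R TT Y X = (d * (\<mu> 0 * g Y Y) - \<alpha> * \<alpha> + 9 * (\<Sum>i=1..m. b i * b i * c i)) *\<^sub>R X"
        using vec_alg[OF E dQ T2] .
      then have "(1/d) *\<^sub>R (d *\<^sub>R TT Y X) = (1/d) *\<^sub>R ((d * (\<mu> 0 * g Y Y) - \<alpha> * \<alpha> + 9 * (\<Sum>i=1..m. b i * b i * c i)) *\<^sub>R X)"
        by (rule arg_cong)
      then have "TT Y X = ((d * (\<mu> 0 * g Y Y) - \<alpha> * \<alpha> + 9 * (\<Sum>i=1..m. b i * b i * c i)) / d) *\<^sub>R X"
        using False by (simp only: scaleR_scaleR) simp
      then show ?thesis by blast
    next
      case True
      then have P3: "3 *\<^sub>R P = \<alpha> *\<^sub>R X" using E by (simp add: algebra_simps)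
      have gXP: "g X P = 0"
        unfolding P_def g_rsum[OF bil]
      proof (intro sum.neutral ballI)
        fix i assume i: "i \<in> {1..m}"
        show "g X (b i *\<^sub>R J i X) = 0" using gJxx[OF i, of X] sym[of X "J i X"]
          by (simp add: bilinear_rmul[OF bil])
      qed
      have "3 * g X P = \<alpha> * g X X"
        using arg_cong[OF P3, of "g X"] bilinear_rmul[OF bil] by simp
      then have "\<alpha> = 0" using gXP nX by simp
      then have P0: "P = 0" using P3 by simp
      have bc: "b k * c k = 0" if k: "k \<in> {1..m}" for k
      proof -
        have "g (J k X) P = (\<Sum>i=1..m. b i * (if k = i then - c k * g X X else 0))"
          unfolding P_def g_rsum[OF bil] using bilinear_rmul[OF bil] orth[OF k]
          by (intro sum.cong refl) simp
        also have "\<dots> = b k * (- c k * g X X)"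
          using k by (simp add: if_distrib sum.delta cong: if_cong)
        finally have "b k * (- c k * g X X) = 0" using P0 bilinear_rzero[OF bil] by simp
        then show ?thesis using nX by simp
      qed
      have b0: "b k = 0" if k: "k \<in> {1..m}" for k
      proof (cases "c k = 0")
        case False then show ?thesis using bc[OF k] by simp
      next
        case True
        have others: "b i = 0" if "i \<in> {1..m} - {k}" for i
        proof -
          have "c i \<noteq> 0"
          proof
            assume "c i = 0"
            then have "{i, k} \<subseteq> {i \<in> {1..m}. c i = 0}" using that k True by auto
            then have "card {i, k} \<le> card {i \<in> {1..m}. c i = 0}" by (intro card_mono) auto
            then show False using card1 that by auto
          qed
          then show ?thesis using bc that by auto
        qed
        have "P = b k *\<^sub>R J k X + (\<Sum>i\<in>{1..m} - {k}. b i *\<^sub>R J i X)"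
          unfolding P_def using sum.remove[of "{1..m}" k] k by simp
        also have "(\<Sum>i\<in>{1..m} - {k}. b i *\<^sub>R J i X) = 0" using others by simp
        finally have "b k *\<^sub>R J k X = 0" using P0 by simp
        then have "b k = 0 \<or> J k X = 0" by simp
        then show ?thesis
        proof
          assume "J k X = 0"
          then have "g (J k Y) X = 0" using gJxy[OF k, of X Y] bilinear_lzero[OF bil] by simp
          then show ?thesis unfolding b_def by simp
        qed
      qed
      have "Q = 0" unfolding Q_def using b0 by simp
      then have "TT Y X = (\<mu> 0 * g Y Y) *\<^sub>R X" using F2 \<open>\<alpha> = 0\<close> unfolding \<alpha>_def by (auto simp: algebra_simps)
      then show ?thesis by blast
    qed
    then show "eigenvector (jacobi_op g R Y) X" unfolding eigenvector_def jac using X0 by blast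
  qed
qed

end
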